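(* Let $(X_n)$ be i.i.d. real random variables distributed as $X$, with $\mathbb{P}(X<0)>0$ and $X$ non-lattice, and let $(Y_n)$ be i.i.d., independent of $(X_n)$, with $\mathbb{P}(Y_1=1)=p=1-\mathbb{P}(Y_1=-1)$, $p\in(0,1)$. Let $W$ have the stationary distribution of $W_{n+1}=(Y_nW_n+X_n)^+$. Suppose there exists $\kappa>0$ with $\mathbb{E}[e^{\kappa X}]=1/p$ and $m=\mathbb{E}[Xe^{\kappa X}]<\infty$. Let $R=e^W$, $M=Be^X$ with $B$ Bernoulli($p$) independent of $X$, and $(B,X)$ independent of $R$, and let \[C=\frac1m\int_0^\infty\big[\mathbb{P}(R>t)-\mathbb{P}(MR>t)\big]t^{\kappa-1}\,dt.\] Then, with $X$ and $W$ independent, \[C=\frac{1-p}{m\kappa}+\frac{1-p}{m}\int_0^\infty\mathbb{P}(X-W>s)e^{\kappa s}\,ds+\frac pm\int_{-\infty}^0e^{\kappa s}\,\mathbb{P}(X+W\le s)\,ds.\]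
   Context: $W$ denotes a random variable with $W\stackrel{D}{=}(YW+X)^+$, where $W,Y,X$ are independent and $Y\stackrel{D}{=}Y_1$. *)

theory Defs
  imports "HOL-Probability.Probability"
begin

definition (in prob_space) nonlattice_rv :: "('a \<Rightarrow> real) \<Rightarrow> bool" where
  "nonlattice_rv X \<longleftrightarrow>
     \<not> (\<exists>a h. h > 0 \<and> (AE \<omega> in M. \<exists>k::int. X \<omega> = a + of_int k * h))"

end

theory Submission
  imports Defs
begin


lemma (in prob_space) indep_restrict_pair:
  assumes ind: "indep_vars (\<lambda>_. borel) XX I" and a: "a \<in> I" "K \<subseteq> I" "a \<notin> K"
  and f: "f \<in> borel_measurable (PiM K (\<lambda>_. borel))"
  shows "indep_var borel (XX a) borel (\<lambda>\<omega>. f (restrict (\<lambda>i. XX i \<omega>) K))"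
proof -
  have "indep_var (PiM {a} (\<lambda>_. borel)) (\<lambda>\<omega>. restrict (\<lambda>i. XX i \<omega>) {a})
      (PiM K (\<lambda>_. borel)) (\<lambda>\<omega>. restrict (\<lambda>i. XX i \<omega>) K)"
    by (rule indep_var_restrict[OF ind]) (use a in auto)
  then have "indep_var borel ((\<lambda>g. g a) \<circ> (\<lambda>\<omega>. restrict (\<lambda>i. XX i \<omega>) {a}))
      borel (f \<circ> (\<lambda>\<omega>. restrict (\<lambda>i. XX i \<omega>) K))"
    by (rule indep_var_compose) (auto intro: f measurable_component_singleton)
  then show ?thesis by (simp add: comp_def)
qed




locale setting = prob_space M for M :: "'a measure" +
  fixes X Y W B :: "'a \<Rightarrow> real" and p \<kappa> :: real
  assumes Xm[measurable]: "X \<in> borel_measurable M" and Ym[measurable]: "Y \<in> borel_measurable M"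
    and Wm[measurable]: "W \<in> borel_measurable M" and Bm[measurable]: "B \<in> borel_measurable M"
    and indep: "indep_vars (\<lambda>_. borel)
          (\<lambda>i::nat. if i = 0 then X else if i = 1 then Y else if i = 2 then W else B)
          {0, 1, 2, 3}"
    and p: "0 < p" "p < 1"
    and Y1: "measure M {\<omega> \<in> space M. Y \<omega> = 1} = p"
    and Ym1: "measure M {\<omega> \<in> space M. Y \<omega> = -1} = 1 - p"
    and B1: "measure M {\<omega> \<in> space M. B \<omega> = 1} = p"
    and B0: "measure M {\<omega> \<in> space M. B \<omega> = 0} = 1 - p"
    and stat: "distr M borel W = distr M borel (\<lambda>\<omega>. max 0 (Y \<omega> * W \<omega> + X \<omega>))"
    and kpos: "\<kappa> > 0"
    and int1: "integrable M (\<lambda>\<omega>. exp (\<kappa> * X \<omega>))"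
    and mgf: "(\<integral>\<omega>. exp (\<kappa> * X \<omega>) \<partial>M) = 1 / p"
begin

abbreviation "XX \<equiv> (\<lambda>i::nat. if i = 0 then X else if i = 1 then Y else if i = 2 then W else B)"

lemma indep_Y_plus: "indep_var borel Y borel (\<lambda>\<omega>. X \<omega> + W \<omega>)"
proof -
  have "indep_var borel (XX 1) borel (\<lambda>\<omega>. (\<lambda>g. g 0 + g 2) (restrict (\<lambda>i. XX i \<omega>) {0,2}))"
    by (rule indep_restrict_pair[OF indep]) (auto intro!: borel_measurable_add measurable_component_singleton)
  then show ?thesis by simp
qed

lemma indep_Y_minus: "indep_var borel Y borel (\<lambda>\<omega>. X \<omega> - W \<omega>)"
proof -
  have "indep_var borel (XX 1) borel (\<lambda>\<omega>. (\<lambda>g. g 0 - g 2) (restrict (\<lambda>i. XX i \<omega>) {0,2}))"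
    by (rule indep_restrict_pair[OF indep]) (auto intro!: borel_measurable_diff measurable_component_singleton)
  then show ?thesis by simp
qed

lemma indep_B_plus: "indep_var borel B borel (\<lambda>\<omega>. X \<omega> + W \<omega>)"
proof -
  have "indep_var borel (XX 3) borel (\<lambda>\<omega>. (\<lambda>g. g 0 + g 2) (restrict (\<lambda>i. XX i \<omega>) {0,2}))"
    by (rule indep_restrict_pair[OF indep]) (auto intro!: borel_measurable_add measurable_component_singleton)
  then show ?thesis by simp
qed

lemma indep_event:
  assumes "indep_var borel U borel V" "c \<in> sets borel" "D \<in> sets borel"
  shows "prob {\<omega> \<in> space M. U \<omega> \<in> c \<and> V \<omega> \<in> D} = prob {\<omega> \<in> space M. U \<omega> \<in> c} * prob {\<omega> \<in> space M. V \<omega> \<in> D}"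
proof -
  have "prob ((\<lambda>x. (U x, V x)) -` (c \<times> D) \<inter> space M) = prob (U -` c \<inter> space M) * prob (V -` D \<inter> space M)"
    by (rule indep_varD[OF assms])
  moreover have "(\<lambda>x. (U x, V x)) -` (c \<times> D) \<inter> space M = {\<omega> \<in> space M. U \<omega> \<in> c \<and> V \<omega> \<in> D}" by auto
  moreover have "U -` c \<inter> space M = {\<omega> \<in> space M. U \<omega> \<in> c}" by auto
  moreover have "V -` D \<inter> space M = {\<omega> \<in> space M. V \<omega> \<in> D}" by auto
  ultimately show ?thesis by simp
qed

lemma stat_prob:
  assumes "A \<in> sets borel"
  shows "prob {\<omega> \<in> space M. W \<omega> \<in> A} = prob {\<omega> \<in> space M. max 0 (Y \<omega> * W \<omega> + X \<omega>) \<in> A}"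
proof -
  have "measure (distr M borel W) A = measure (distr M borel (\<lambda>\<omega>. max 0 (Y \<omega> * W \<omega> + X \<omega>))) A"
    by (simp add: stat)
  then show ?thesis using assms
    by (subst (asm) (1 2) measure_distr) (auto simp: vimage_def Int_def conj_commute)
qed

lemma W_nonneg: "AE \<omega> in M. 0 \<le> W \<omega>"
proof -
  have "prob {\<omega> \<in> space M. W \<omega> \<in> {0..}} = prob {\<omega> \<in> space M. max 0 (Y \<omega> * W \<omega> + X \<omega>) \<in> {0..}}"
    by (rule stat_prob) auto
  also have "\<dots> = 1" by (simp add: prob_space)
  finally have "prob {\<omega> \<in> space M. 0 \<le> W \<omega>} = 1" by simp
  from AE_prob_1[OF this] show ?thesis by auto
qed

lemma Y_pm: "AE \<omega> in M. Y \<omega> = 1 \<or> Y \<omega> = -1"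
proof -
  have "prob ({\<omega> \<in> space M. Y \<omega> = 1} \<union> {\<omega> \<in> space M. Y \<omega> = -1}) = prob {\<omega> \<in> space M. Y \<omega> = 1} + prob {\<omega> \<in> space M. Y \<omega> = -1}"
    by (rule finite_measure_Union) (measurable, measurable, force)
  also have "\<dots> = 1" using Y1 Ym1 by simp
  also have "{\<omega> \<in> space M. Y \<omega> = 1} \<union> {\<omega> \<in> space M. Y \<omega> = -1} = {\<omega> \<in> space M. Y \<omega> = 1 \<or> Y \<omega> = -1}" by blast
  finally have "prob {\<omega> \<in> space M. Y \<omega> = 1 \<or> Y \<omega> = -1} = 1" .
  from AE_prob_1[OF this] show ?thesis by auto
qed

lemma B_01: "AE \<omega> in M. B \<omega> = 1 \<or> B \<omega> = 0"
proof -
  have "prob ({\<omega> \<in> space M. B \<omega> = 1} \<union> {\<omega> \<in> space M. B \<omega> = 0}) = prob {\<omega> \<in> space M. B \<omega> = 1} + prob {\<omega> \<in> space M. B \<omega> = 0}"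
    by (rule finite_measure_Union) (measurable, measurable, force)
  also have "\<dots> = 1" using B1 B0 by simp
  also have "{\<omega> \<in> space M. B \<omega> = 1} \<union> {\<omega> \<in> space M. B \<omega> = 0} = {\<omega> \<in> space M. B \<omega> = 1 \<or> B \<omega> = 0}" by blast
  finally have "prob {\<omega> \<in> space M. B \<omega> = 1 \<or> B \<omega> = 0} = 1" .
  from AE_prob_1[OF this] show ?thesis by auto
qed

end


context setting begin

definition "Fw s = prob {\<omega> \<in> space M. s < W \<omega>}"
definition "G s = prob {\<omega> \<in> space M. s < X \<omega> + W \<omega>}"
definition "H s = prob {\<omega> \<in> space M. s < X \<omega> - W \<omega>}"
definition "K s = prob {\<omega> \<in> space M. X \<omega> + W \<omega> \<le> s}"

lemma Fw_split:
  assumes s: "0 \<le> s"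
  shows "Fw s = p * G s + (1 - p) * H s"
proof -
  have "Fw s = prob {\<omega> \<in> space M. W \<omega> \<in> {s<..}}" by (simp add: Fw_def)
  also have "\<dots> = prob {\<omega> \<in> space M. max 0 (Y \<omega> * W \<omega> + X \<omega>) \<in> {s<..}}"
    by (rule stat_prob) auto
  also have "\<dots> = prob ({\<omega> \<in> space M. Y \<omega> \<in> {1} \<and> X \<omega> + W \<omega> \<in> {s<..}} \<union> {\<omega> \<in> space M. Y \<omega> \<in> {-1} \<and> X \<omega> - W \<omega> \<in> {s<..}})"
  proof (rule finite_measure_eq_AE)
    show "AE x in M. (x \<in> {\<omega> \<in> space M. max 0 (Y \<omega> * W \<omega> + X \<omega>) \<in> {s<..}}) =
        (x \<in> {\<omega> \<in> space M. Y \<omega> \<in> {1} \<and> X \<omega> + W \<omega> \<in> {s<..}} \<union> {\<omega> \<in> space M. Y \<omega> \<in> {-1} \<and> X \<omega> - W \<omega> \<in> {s<..}})"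
      using Y_pm
    proof eventually_elim
      case (elim x)
      then show ?case using s by auto
    qed
  qed measurable
  also have "\<dots> = prob {\<omega> \<in> space M. Y \<omega> \<in> {1} \<and> X \<omega> + W \<omega> \<in> {s<..}} + prob {\<omega> \<in> space M. Y \<omega> \<in> {-1} \<and> X \<omega> - W \<omega> \<in> {s<..}}"
    by (rule finite_measure_Union) (measurable, measurable, force)
  also have "\<dots> = prob {\<omega> \<in> space M. Y \<omega> \<in> {1}} * prob {\<omega> \<in> space M. X \<omega> + W \<omega> \<in> {s<..}} + prob {\<omega> \<in> space M. Y \<omega> \<in> {-1}} * prob {\<omega> \<in> space M. X \<omega> - W \<omega> \<in> {s<..}}"
    by (simp only: indep_event[OF indep_Y_plus, of "{1}" "{s<..}"] indep_event[OF indep_Y_minus, of "{-1}" "{s<..}"] borel_closed closed_singleton borel_open open_greaterThan)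
  also have "\<dots> = p * G s + (1 - p) * H s"
    using Y1 Ym1 by (simp add: G_def H_def)
  finally show ?thesis .
qed

lemma Fw_neg:
  assumes s: "s < 0"
  shows "Fw s = 1"
proof -
  have "Fw s = prob (space M)" unfolding Fw_def
    by (rule finite_measure_eq_AE) (use W_nonneg s in \<open>auto elim!: eventually_mono\<close>)
  then show ?thesis by (simp add: prob_space)
qed

lemma R_prob:
  assumes t: "0 < t"
  shows "prob {\<omega> \<in> space M. exp (W \<omega>) > t} = Fw (ln t)"
proof -
  have e: "\<And>w. t < exp w \<longleftrightarrow> ln t < w" using t by (metis exp_less_cancel_iff exp_ln)
  have "{\<omega> \<in> space M. exp (W \<omega>) > t} = {\<omega> \<in> space M. ln t < W \<omega>}"
    by (simp add: e)
  then show ?thesis by (simp add: Fw_def)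
qed

lemma MR_prob:
  assumes t: "0 < t"
  shows "prob {\<omega> \<in> space M. B \<omega> * exp (X \<omega>) * exp (W \<omega>) > t} = p * G (ln t)"
proof -
  have "prob {\<omega> \<in> space M. B \<omega> * exp (X \<omega>) * exp (W \<omega>) > t} = prob {\<omega> \<in> space M. B \<omega> \<in> {1} \<and> X \<omega> + W \<omega> \<in> {ln t<..}}"
  proof (rule finite_measure_eq_AE)
    show "AE x in M. (x \<in> {\<omega> \<in> space M. B \<omega> * exp (X \<omega>) * exp (W \<omega>) > t}) =
        (x \<in> {\<omega> \<in> space M. B \<omega> \<in> {1} \<and> X \<omega> + W \<omega> \<in> {ln t<..}})"
      using B_01
    proof eventually_elim
      case (elim x)
      have "t < exp (X x + W x) \<longleftrightarrow> ln t < X x + W x"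
        using t by (metis exp_less_cancel_iff exp_ln)
      then show ?case using t elim by (auto simp: exp_add)
    qed
  qed measurable
  also have "\<dots> = prob {\<omega> \<in> space M. B \<omega> \<in> {1}} * prob {\<omega> \<in> space M. X \<omega> + W \<omega> \<in> {ln t<..}}"
    by (rule indep_event[OF indep_B_plus]) auto
  also have "\<dots> = p * G (ln t)" using B1 by (simp add: G_def)
  finally show ?thesis .
qed

lemma K_eq: "K s = 1 - G s"
proof -
  have "prob (space M - {\<omega> \<in> space M. s < X \<omega> + W \<omega>}) = 1 - G s"
    unfolding G_def by (rule prob_compl) measurable
  moreover have "space M - {\<omega> \<in> space M. s < X \<omega> + W \<omega>} = {\<omega> \<in> space M. X \<omega> + W \<omega> \<le> s}" by auto
  ultimately show ?thesis by (simp add: K_def)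
qed

lemma H_le: "H s \<le> prob {\<omega> \<in> space M. s < X \<omega>}"
  unfolding H_def
  by (rule finite_measure_mono_AE) (use W_nonneg in \<open>auto elim!: eventually_mono\<close>)

end



lemma exp_int_neg:
  fixes k :: real assumes k: "0 < k"
  shows "set_integrable lborel {..0} (\<lambda>s. exp (k * s))" "(LBINT s:{..0}. exp (k * s)) = 1 / k"
proof -
  define F where "F = (\<lambda>s::real. exp (k * s) / k)"
  have d: "\<And>x. (-\<infinity>) < ereal x \<Longrightarrow> ereal x < ereal 0 \<Longrightarrow> (F has_real_derivative exp (k * x)) (at x)"
    using k unfolding F_def by (auto intro!: derivative_eq_intros)
  have l1: "((F \<circ> real_of_ereal) \<longlongrightarrow> 0) (at_right (-\<infinity>))"
    unfolding ereal_tendsto_simps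
  proof -
    have "((\<lambda>s. exp (k * s)) \<longlongrightarrow> 0) at_bot"
      using k by (auto intro!: exp_at_bot[THEN filterlim_compose] filterlim_tendsto_pos_mult_at_bot filterlim_ident)
    then show "(F \<longlongrightarrow> 0) at_bot"
      unfolding F_def using tendsto_divide_zero by blast
  qed
  have l2: "((F \<circ> real_of_ereal) \<longlongrightarrow> 1 / k) (at_left (ereal 0))"
    unfolding ereal_tendsto_simps
  proof -
    have "((\<lambda>s. exp (k * s) / k) \<longlongrightarrow> exp (k * 0) / k) (at_left 0)"
      by (intro tendsto_intros) (use k in auto)
    then show "(F \<longlongrightarrow> 1 / k) (at_left 0)" unfolding F_def by simp
  qed
  note FTC0 = interval_integral_FTC_nonneg[of "-\<infinity>" "ereal 0" F "\<lambda>s. exp (k * s)" 0 "1 / k", OF _ d _ _ l1 l2]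
  have FTC: "set_integrable lborel (einterval (-\<infinity>) (ereal 0)) (\<lambda>s. exp (k * s))"
     "(LBINT s=-\<infinity>..ereal 0. exp (k * s)) = 1 / k - 0"
    by (rule FTC0; auto intro: continuous_intros)+
  have e: "einterval (-\<infinity>) (ereal 0) = {..<0}" by simp
  have AE: "AE x in lborel. indicator {..0} x *\<^sub>R exp (k * x) = indicator {..<0} x *\<^sub>R exp (k * x)"
    using AE_lborel_singleton[of 0] by eventually_elim (auto simp: indicator_def)
  have i0: "integrable lborel (\<lambda>x. indicator {..<0} x *\<^sub>R exp (k * x))"
    using FTC(1) by (simp add: e set_integrable_def)
  show "set_integrable lborel {..0} (\<lambda>s. exp (k * s))"
    unfolding set_integrable_def using i0 AE
    by (subst integrable_cong_AE) auto
  have "(LBINT s:{..0}. exp (k * s)) = (LBINT s:{..<0}. exp (k * s))"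
    unfolding set_lebesgue_integral_def by (rule integral_cong_AE) (use AE in auto)
  also have "\<dots> = 1 / k" using FTC(2) by (simp add: interval_lebesgue_integral_le_eq e)
  finally show "(LBINT s:{..0}. exp (k * s)) = 1 / k" .
qed

context setting begin

lemma surv_meas:
  fixes Z :: "'a \<Rightarrow> real"
  assumes [measurable]: "Z \<in> borel_measurable M"
  shows "(\<lambda>s. prob {\<omega> \<in> space M. s < Z \<omega>}) \<in> borel_measurable borel"
proof -
  have "mono (\<lambda>u. prob {\<omega> \<in> space M. - u < Z \<omega>})"
    by (rule monoI, rule finite_measure_mono) auto
  then have m: "(\<lambda>u. prob {\<omega> \<in> space M. - u < Z \<omega>}) \<in> borel_measurable borel"
    by (rule borel_measurable_mono)
  have "(\<lambda>s. (\<lambda>u. prob {\<omega> \<in> space M. - u < Z \<omega>}) (- s)) \<in> borel_measurable borel"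
    by (rule measurable_compose[OF borel_measurable_uminus[OF measurable_ident_sets[OF refl]] m])
  then show ?thesis by simp
qed

lemma Fw_meas[measurable]: "Fw \<in> borel_measurable borel"
  unfolding Fw_def[abs_def] by (rule surv_meas) measurable
lemma G_meas[measurable]: "G \<in> borel_measurable borel"
  unfolding G_def[abs_def] by (rule surv_meas) measurable
lemma H_meas[measurable]: "H \<in> borel_measurable borel"
  unfolding H_def[abs_def] by (rule surv_meas) measurable
lemma K_meas[measurable]: "K \<in> borel_measurable borel"
proof -
  have "K = (\<lambda>s. 1 - G s)" by (simp add: K_eq fun_eq_iff)
  then show ?thesis by simp
qed

definition "phi s = Fw s - p * G s"

lemma phi_meas[measurable]: "phi \<in> borel_measurable borel"
  unfolding phi_def[abs_def] by measurable

lemma phi_pos: "0 \<le> s \<Longrightarrow> phi s = (1 - p) * H s"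
  by (simp add: phi_def Fw_split algebra_simps)

lemma phi_neg: "s < 0 \<Longrightarrow> phi s = (1 - p) + p * K s"
  by (simp add: phi_def Fw_neg K_eq algebra_simps)

lemma phi_nonneg: "0 \<le> phi s"
proof (cases "0 \<le> s")
  case True then show ?thesis using p by (simp add: phi_pos H_def)
next
  case False then show ?thesis using p by (simp add: phi_neg K_def)
qed

lemma phi_le1: "phi s \<le> 1"
proof (cases "0 \<le> s")
  case True
  have "H s \<le> 1" unfolding H_def by simp
  then have "(1 - p) * H s \<le> 1 - p" using mult_left_mono[of "H s" 1 "1 - p"] p by simp
  moreover have "phi s = (1 - p) * H s" using True by (simp add: phi_pos)
  ultimately show ?thesis using p by linarith
next
  case False
  have "K s \<le> 1" unfolding K_def by simp
  then have "p * K s \<le> p" using mult_left_mono[of "K s" 1 p] p by simp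
  moreover have "phi s = (1 - p) + p * K s" using False by (simp add: phi_neg)
  ultimately show ?thesis using p by linarith
qed

end


context setting begin

lemma inner_bound:
  "(\<integral>\<^sup>+ s. ennreal (exp (\<kappa> * s) * indicator {0<..} s * indicator {..<x} s) \<partial>lborel)
     \<le> ennreal ((exp (\<kappa> * x) + 1) / \<kappa>)"
proof -
  have "(\<integral>\<^sup>+ s. ennreal (exp (\<kappa> * s) * indicator {0<..} s * indicator {..<x} s) \<partial>lborel)
      \<le> (\<integral>\<^sup>+ s. ennreal (exp (\<kappa> * s)) * indicator {0..max 0 x} s \<partial>lborel)"
    by (intro nn_integral_mono) (auto simp: indicator_def)
  also have "\<dots> = ennreal (exp (\<kappa> * max 0 x) / \<kappa> - exp (\<kappa> * 0) / \<kappa>)"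
    by (rule nn_integral_FTC_Icc[where F="\<lambda>s. exp (\<kappa> * s) / \<kappa>"])
       (use kpos in \<open>auto intro!: derivative_eq_intros\<close>)
  also have "\<dots> \<le> ennreal ((exp (\<kappa> * x) + 1) / \<kappa>)"
  proof (rule ennreal_leI)
    have "exp (\<kappa> * max 0 x) \<le> exp (\<kappa> * x) + 1"
      using kpos by (cases "0 \<le> x") (auto simp: max_def)
    then show "exp (\<kappa> * max 0 x) / \<kappa> - exp (\<kappa> * 0) / \<kappa> \<le> (exp (\<kappa> * x) + 1) / \<kappa>"
      using kpos by (simp add: divide_right_mono diff_divide_distrib[symmetric])
  qed
  finally show ?thesis .
qed

lemma tail_int: "integrable lborel (\<lambda>s. indicator {0<..} s * (prob {\<omega> \<in> space M. s < X \<omega>} * exp (\<kappa> * s)))"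
proof (rule integrableI_nonneg)
  have [measurable]: "(\<lambda>s. prob {\<omega> \<in> space M. s < X \<omega>}) \<in> borel_measurable borel"
    by (rule surv_meas) measurable
  show "(\<lambda>s. indicator {0<..} s * (prob {\<omega> \<in> space M. s < X \<omega>} * exp (\<kappa> * s))) \<in> borel_measurable lborel"
    by measurable
  show "AE x in lborel. 0 \<le> indicator {0<..} x * (prob {\<omega> \<in> space M. x < X \<omega>} * exp (\<kappa> * x))"
    by (auto simp: indicator_def)
  interpret pair_sigma_finite M lborel
    by (intro pair_sigma_finite.intro sigma_finite_measure_axioms) (rule lborel.sigma_finite_measure_axioms)
  have step1: "ennreal (indicator {0<..} s * (prob {\<omega> \<in> space M. s < X \<omega>} * exp (\<kappa> * s)))
      = (\<integral>\<^sup>+ \<omega>. ennreal (exp (\<kappa> * s) * indicator {0<..} s * indicator {..<X \<omega>} s) \<partial>M)" for s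
  proof -
    have "(\<integral>\<^sup>+ \<omega>. ennreal (exp (\<kappa> * s) * indicator {0<..} s * indicator {..<X \<omega>} s) \<partial>M)
        = (\<integral>\<^sup>+ \<omega>. ennreal (exp (\<kappa> * s) * indicator {0<..} s) * indicator {\<omega> \<in> space M. s < X \<omega>} \<omega> \<partial>M)"
      by (intro nn_integral_cong) (auto simp: indicator_def)
    also have "\<dots> = ennreal (exp (\<kappa> * s) * indicator {0<..} s) * emeasure M {\<omega> \<in> space M. s < X \<omega>}"
      by (rule nn_integral_cmult_indicator) measurable
    also have "\<dots> = ennreal (indicator {0<..} s * (prob {\<omega> \<in> space M. s < X \<omega>} * exp (\<kappa> * s)))"
      by (simp add: emeasure_eq_measure ennreal_mult'' mult_ac)
    finally show ?thesis by simp
  qed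
  have "(\<integral>\<^sup>+ s. ennreal (indicator {0<..} s * (prob {\<omega> \<in> space M. s < X \<omega>} * exp (\<kappa> * s))) \<partial>lborel)
      = (\<integral>\<^sup>+ s. (\<integral>\<^sup>+ \<omega>. ennreal (exp (\<kappa> * s) * indicator {0<..} s * indicator {..<X \<omega>} s) \<partial>M) \<partial>lborel)"
    by (simp add: step1)
  also have "\<dots> = (\<integral>\<^sup>+ \<omega>. (\<integral>\<^sup>+ s. ennreal (exp (\<kappa> * s) * indicator {0<..} s * indicator {..<X \<omega>} s) \<partial>lborel) \<partial>M)"
  proof (rule Fubini')
    have "(\<lambda>(\<omega>, s). s < X \<omega>) \<in> measurable (M \<Otimes>\<^sub>M lborel) (count_space UNIV)" by measurable
    then show "(\<lambda>(\<omega>, s). ennreal (exp (\<kappa> * s) * indicator {0<..} s * indicator {..<X \<omega>} s)) \<in> borel_measurable (M \<Otimes>\<^sub>M lborel)"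
      unfolding indicator_def[abs_def] by (simp add: split_beta) measurable
  qed
  also have "\<dots> \<le> (\<integral>\<^sup>+ \<omega>. ennreal ((exp (\<kappa> * X \<omega>) + 1) / \<kappa>) \<partial>M)"
    by (intro nn_integral_mono inner_bound)
  also have "\<dots> = ennreal (\<integral> \<omega>. (exp (\<kappa> * X \<omega>) + 1) / \<kappa> \<partial>M)"
    by (rule nn_integral_eq_integral) (use int1 kpos in auto)
  also have "\<dots> < \<infinity>" by simp
  finally show "(\<integral>\<^sup>+ s. ennreal (indicator {0<..} s * (prob {\<omega> \<in> space M. s < X \<omega>} * exp (\<kappa> * s))) \<partial>lborel) < \<infinity>" .
qed

end



lemma SUP_ind:
  fixes f :: "'a \<Rightarrow> real"
  assumes "incseq A" "0 \<le> f x"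
  shows "(SUP i::nat. ennreal (f x * indicator (A i) x)) = ennreal (f x * indicator (\<Union>i. A i) x)"
proof (cases "x \<in> (\<Union>i. A i)")
  case True
  then obtain j where j: "x \<in> A j" by auto
  have "\<And>i. ennreal (f x * indicator (A i) x) \<le> ennreal (f x)"
    using assms by (auto simp: indicator_def)
  moreover have "ennreal (f x) \<le> (SUP i::nat. ennreal (f x * indicator (A i) x))"
    using j by (intro SUP_upper2[of j]) auto
  ultimately show ?thesis using True
    by (auto intro: antisym SUP_least)
next
  case False
  then show ?thesis by auto
qed

lemma incseq_ind:
  fixes f :: "'a \<Rightarrow> real"
  assumes "incseq (A :: nat \<Rightarrow> 'a set)" "\<And>x. 0 \<le> f x"
  shows "incseq (\<lambda>i x. ennreal (f x * indicator (A i) x))"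
  unfolding incseq_def le_fun_def
proof (intro allI impI)
  fix m n :: nat and x assume "m \<le> n"
  then have "A m \<subseteq> A n" using assms(1) by (simp add: incseq_def)
  then show "ennreal (f x * indicator (A m) x) \<le> ennreal (f x * indicator (A n) x)"
    using assms(2)[of x] by (auto simp: indicator_def intro!: ennreal_leI)
qed
lemma subst_exp:
  fixes f :: "real \<Rightarrow> real"
  assumes f[measurable]: "f \<in> borel_measurable borel" and nn: "\<And>t. 0 \<le> f t"
  shows "(\<integral>\<^sup>+t. ennreal (f t * indicator {0<..} t) \<partial>lborel) = (\<integral>\<^sup>+s. ennreal (f (exp s) * exp s) \<partial>lborel)"
proof -
  have incA: "incseq (\<lambda>n::nat. {exp (- real n)..exp (real n)})"
    by (auto simp: incseq_def)
  have UA: "(\<Union>n::nat. {exp (- real n)..exp (real n)}) = {0<..}"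
  proof safe
    fix t :: real assume t: "0 < t"
    obtain n :: nat where n: "\<bar>ln t\<bar> \<le> real n" using real_arch_simple by blast
    have "- real n \<le> ln t" using n by linarith
    then have "exp (- real n) \<le> exp (ln t)" by simp
    then have "exp (- real n) \<le> t" using t by simp
    moreover have "ln t \<le> real n" using n by linarith
    then have "exp (ln t) \<le> exp (real n)" by simp
    then have "t \<le> exp (real n)" using t by simp
    ultimately show "t \<in> (\<Union>n::nat. {exp (- real n)..exp (real n)})" by auto
  next
    fix t n assume "t \<in> {exp (- real (n::nat))..exp (real n)}"
    then show "0 < t" by (auto intro: less_le_trans[OF exp_gt_zero])
  qed
  have incB: "incseq (\<lambda>n::nat. {- real n..real n})"
    by (auto simp: incseq_def)
  have UB: "(\<Union>n::nat. {- real n..real n}) = UNIV"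
  proof safe
    fix s :: real
    obtain n :: nat where n: "\<bar>s\<bar> \<le> real n" using real_arch_simple by blast
    then have "s \<in> {- real n..real n}" by auto
    then show "s \<in> (\<Union>n::nat. {- real n..real n})" by blast
  qed auto
  have "(\<integral>\<^sup>+t. ennreal (f t * indicator {0<..} t) \<partial>lborel)
      = (\<integral>\<^sup>+t. (SUP n::nat. ennreal (f t * indicator {exp (- real n)..exp (real n)} t)) \<partial>lborel)"
    by (rule nn_integral_cong) (simp add: SUP_ind[where f=f, OF incA nn] UA)
  also have "\<dots> = (SUP n::nat. \<integral>\<^sup>+t. ennreal (f t * indicator {exp (- real n)..exp (real n)} t) \<partial>lborel)"
    apply (rule nn_integral_monotone_convergence_SUP)
    using incseq_ind[OF incA nn] by auto
  also have "\<dots> = (SUP n::nat. \<integral>\<^sup>+s. ennreal (f (exp s) * exp s * indicator {- real n..real n} s) \<partial>lborel)"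
    apply (rule SUP_cong[OF refl])
    apply (rule nn_integral_substitution)
    by (auto simp: set_borel_measurable_def intro!: derivative_eq_intros continuous_intros)
  also have "\<dots> = (\<integral>\<^sup>+s. (SUP n::nat. ennreal (f (exp s) * exp s * indicator {- real n..real n} s)) \<partial>lborel)"
    apply (rule nn_integral_monotone_convergence_SUP[symmetric])
    using incseq_ind[OF incB, of "\<lambda>s. f (exp s) * exp s"] nn by auto
  also have "\<dots> = (\<integral>\<^sup>+s. ennreal (f (exp s) * exp s) \<partial>lborel)"
    proof (rule nn_integral_cong)
    fix s
    have "(SUP n::nat. ennreal (f (exp s) * exp s * indicator {- real n..real n} s)) = ennreal (f (exp s) * exp s * indicator (\<Union>n::nat. {- real n..real n}) s)"
      by (rule SUP_ind[OF incB]) (use nn in simp)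
    then show "(SUP n::nat. ennreal (f (exp s) * exp s * indicator {- real n..real n} s)) = ennreal (f (exp s) * exp s)"
      by (simp add: UB)
  qed
  finally show ?thesis .
qed

context setting begin

definition "psi s = phi s * exp (\<kappa> * s)"

lemma psi_meas[measurable]: "psi \<in> borel_measurable borel"
  unfolding psi_def[abs_def] by measurable

lemma psi_nonneg: "0 \<le> psi s"
  unfolding psi_def using phi_nonneg by simp

lemma psi_int: "integrable lborel psi"
proof -
  have i1: "integrable lborel (\<lambda>s. indicator {..0} s * exp (\<kappa> * s))"
    using exp_int_neg(1)[OF kpos] by (simp add: set_integrable_def)
  have D: "integrable lborel (\<lambda>s. indicator {..0} s * exp (\<kappa> * s) + indicator {0<..} s * (prob {\<omega> \<in> space M. s < X \<omega>} * exp (\<kappa> * s)))"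
    by (rule Bochner_Integration.integrable_add[OF i1 tail_int])
  show ?thesis
  proof (rule Bochner_Integration.integrable_bound[OF D])
    show "psi \<in> borel_measurable lborel" by measurable
    show "AE x in lborel. norm (psi x) \<le> norm (indicator {..0} x * exp (\<kappa> * x) + indicator {0<..} x * (prob {\<omega> \<in> space M. x < X \<omega>} * exp (\<kappa> * x)))"
    proof (rule AE_I2)
      fix s :: real
      show "norm (psi s) \<le> norm (indicator {..0} s * exp (\<kappa> * s) + indicator {0<..} s * (prob {\<omega> \<in> space M. s < X \<omega>} * exp (\<kappa> * s)))"
      proof (cases "s \<le> 0")
        case True
        have "psi s \<le> exp (\<kappa> * s)" unfolding psi_def using phi_le1[of s] by simp
        then show ?thesis using True psi_nonneg[of s] by (simp add: indicator_def)
      next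
        case False
        have "psi s = (1 - p) * H s * exp (\<kappa> * s)" using False by (simp add: psi_def phi_pos)
        also have "\<dots> \<le> 1 * prob {\<omega> \<in> space M. s < X \<omega>} * exp (\<kappa> * s)"
          using p H_le[of s] by (intro mult_right_mono mult_mono) (auto simp: H_def)
        finally show ?thesis using False psi_nonneg[of s] by (simp add: indicator_def)
      qed
    qed
  qed
qed

lemma psi_subst: "(LBINT t:{0<..}. phi (ln t) * t powr (\<kappa> - 1)) = integral\<^sup>L lborel psi"
proof -
  define f where "f t = phi (ln t) * t powr (\<kappa> - 1)" for t
  have f_meas[measurable]: "f \<in> borel_measurable borel" unfolding f_def[abs_def] by measurable
  have f_nn: "0 \<le> f t" for t unfolding f_def using phi_nonneg by simp
  have fe: "f (exp s) * exp s = psi s" for s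
    unfolding f_def psi_def by (simp add: powr_def exp_add[symmetric] algebra_simps)
  have nn: "(\<integral>\<^sup>+t. ennreal (f t * indicator {0<..} t) \<partial>lborel) = (\<integral>\<^sup>+s. ennreal (psi s) \<partial>lborel)"
    using subst_exp[OF f_meas f_nn] by (simp add: fe)
  have "(LBINT t:{0<..}. phi (ln t) * t powr (\<kappa> - 1)) = integral\<^sup>L lborel (\<lambda>t. f t * indicator {0<..} t)"
    by (simp add: set_lebesgue_integral_def f_def mult_ac)
  also have "\<dots> = enn2real (\<integral>\<^sup>+t. ennreal (f t * indicator {0<..} t) \<partial>lborel)"
    by (rule integral_eq_nn_integral) (auto simp: f_nn)
  also have "\<dots> = enn2real (\<integral>\<^sup>+s. ennreal (psi s) \<partial>lborel)" by (simp add: nn)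
  also have "\<dots> = integral\<^sup>L lborel psi"
    by (rule integral_eq_nn_integral[symmetric]) (auto simp: psi_nonneg)
  finally show ?thesis .
qed

lemma psi_split:
  "integral\<^sup>L lborel psi = (1 - p) / \<kappa> + (1 - p) * (LBINT s:{0<..}. H s * exp (\<kappa> * s))
     + p * (LBINT s:{..0}. exp (\<kappa> * s) * K s)"
proof -
  have iA: "integrable lborel (\<lambda>s. psi s * indicator {..0} s)"
    by (rule integrable_real_mult_indicator[OF _ psi_int]) auto
  have iB: "integrable lborel (\<lambda>s. psi s * indicator {0<..} s)"
    by (rule integrable_real_mult_indicator[OF _ psi_int]) auto
  have i1: "integrable lborel (\<lambda>s. indicator {..0} s *\<^sub>R exp (\<kappa> * s))"
    using exp_int_neg(1)[OF kpos] by (simp add: set_integrable_def)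
  have i2: "integrable lborel (\<lambda>s. indicator {..0} s *\<^sub>R (exp (\<kappa> * s) * K s))"
  proof (rule Bochner_Integration.integrable_bound[OF i1])
    show "(\<lambda>s. indicator {..0} s *\<^sub>R (exp (\<kappa> * s) * K s)) \<in> borel_measurable lborel" by measurable
    show "AE x in lborel. norm (indicator {..0} x *\<^sub>R (exp (\<kappa> * x) * K x)) \<le> norm (indicator {..0} x *\<^sub>R exp (\<kappa> * x))"
    proof (rule AE_I2)
      fix x :: real
      have "0 \<le> K x" "K x \<le> 1" unfolding K_def by auto
      then have "exp (\<kappa> * x) * K x \<le> exp (\<kappa> * x) * 1" by (intro mult_left_mono) auto
      then show "norm (indicator {..0} x *\<^sub>R (exp (\<kappa> * x) * K x)) \<le> norm (indicator {..0} x *\<^sub>R exp (\<kappa> * x))"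
        using \<open>0 \<le> K x\<close> by (simp add: indicator_def abs_mult)
    qed
  qed
  have "integral\<^sup>L lborel psi = integral\<^sup>L lborel (\<lambda>s. psi s * indicator {..0} s + psi s * indicator {0<..} s)"
    by (rule Bochner_Integration.integral_cong) (auto simp: indicator_def)
  also have "\<dots> = integral\<^sup>L lborel (\<lambda>s. psi s * indicator {..0} s) + integral\<^sup>L lborel (\<lambda>s. psi s * indicator {0<..} s)"
    by (rule Bochner_Integration.integral_add[OF iA iB])
  also have "integral\<^sup>L lborel (\<lambda>s. psi s * indicator {0<..} s) = integral\<^sup>L lborel (\<lambda>s. (1 - p) * (indicator {0<..} s *\<^sub>R (H s * exp (\<kappa> * s))))"
    by (rule Bochner_Integration.integral_cong) (auto simp: indicator_def psi_def phi_pos)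
  also have "\<dots> = (1 - p) * (LBINT s:{0<..}. H s * exp (\<kappa> * s))"
    by (simp add: set_lebesgue_integral_def)
  also have "integral\<^sup>L lborel (\<lambda>s. psi s * indicator {..0} s) = integral\<^sup>L lborel (\<lambda>s. (1 - p) * (indicator {..0} s *\<^sub>R exp (\<kappa> * s)) + p * (indicator {..0} s *\<^sub>R (exp (\<kappa> * s) * K s)))"
  proof (rule integral_cong_AE)
    show "AE x in lborel. psi x * indicator {..0} x = (1 - p) * (indicator {..0} x *\<^sub>R exp (\<kappa> * x)) + p * (indicator {..0} x *\<^sub>R (exp (\<kappa> * x) * K x))"
      using AE_lborel_singleton[of 0]
    proof eventually_elim
      case (elim x)
      show ?case
      proof (cases "x < 0")
        case True then show ?thesis by (simp add: psi_def phi_neg indicator_def algebra_simps)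
      next
        case False then show ?thesis using elim by (simp add: indicator_def)
      qed
    qed
  qed measurable
  also have "\<dots> = (1 - p) * integral\<^sup>L lborel (\<lambda>s. indicator {..0} s *\<^sub>R exp (\<kappa> * s)) + p * integral\<^sup>L lborel (\<lambda>s. indicator {..0} s *\<^sub>R (exp (\<kappa> * s) * K s))"
    using i1 i2 by simp
  also have "integral\<^sup>L lborel (\<lambda>s. indicator {..0} s *\<^sub>R exp (\<kappa> * s)) = 1 / \<kappa>"
    using exp_int_neg(2)[OF kpos] by (simp add: set_lebesgue_integral_def)
  finally show ?thesis by (simp add: set_lebesgue_integral_def)
qed

end



lemma final_alg:
  fixes m k p a b :: real
  assumes "k > 0"
  shows "1 / m * ((1 - p) / k + (1 - p) * a + p * b) = (1 - p) / (m * k) + (1 - p) / m * a + p / m * b"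
  using assms by (cases "m = 0") (simp_all add: field_simps)

theorem proposition4p2:
  fixes M :: "'a measure" and X Y W B :: "'a \<Rightarrow> real" and p \<kappa> :: real
  assumes "prob_space M"
    and "X \<in> borel_measurable M" and "Y \<in> borel_measurable M"
    and "W \<in> borel_measurable M" and "B \<in> borel_measurable M"
    and indep: "prob_space.indep_vars M (\<lambda>_. borel)
          (\<lambda>i::nat. if i = 0 then X else if i = 1 then Y else if i = 2 then W else B)
          {0, 1, 2, 3}"
    and p: "0 < p" "p < 1"
    and Xneg: "measure M {\<omega> \<in> space M. X \<omega> < 0} > 0"
    and nonlat: "prob_space.nonlattice_rv M X"
    and Y1: "measure M {\<omega> \<in> space M. Y \<omega> = 1} = p"
    and Ym1: "measure M {\<omega> \<in> space M. Y \<omega> = -1} = 1 - p"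
    and B1: "measure M {\<omega> \<in> space M. B \<omega> = 1} = p"
    and B0: "measure M {\<omega> \<in> space M. B \<omega> = 0} = 1 - p"
    and stat: "distr M borel W = distr M borel (\<lambda>\<omega>. max 0 (Y \<omega> * W \<omega> + X \<omega>))"
    and kpos: "\<kappa> > 0"
    and int1: "integrable M (\<lambda>\<omega>. exp (\<kappa> * X \<omega>))"
    and mgf: "(\<integral>\<omega>. exp (\<kappa> * X \<omega>) \<partial>M) = 1 / p"
    and int2: "integrable M (\<lambda>\<omega>. X \<omega> * exp (\<kappa> * X \<omega>))"
  shows "(let m = (\<integral>\<omega>. X \<omega> * exp (\<kappa> * X \<omega>) \<partial>M);
              R = (\<lambda>\<omega>. exp (W \<omega>));
              MM = (\<lambda>\<omega>. B \<omega> * exp (X \<omega>));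
              C = 1 / m * (LBINT t:{0<..}.
                    (measure M {\<omega> \<in> space M. R \<omega> > t}
                     - measure M {\<omega> \<in> space M. MM \<omega> * R \<omega> > t}) * t powr (\<kappa> - 1))
          in C = (1 - p) / (m * \<kappa>)
               + (1 - p) / m * (LBINT s:{0<..}.
                    measure M {\<omega> \<in> space M. X \<omega> - W \<omega> > s} * exp (\<kappa> * s))
               + p / m * (LBINT s:{..0}.
                    exp (\<kappa> * s) * measure M {\<omega> \<in> space M. X \<omega> + W \<omega> \<le> s}))"
proof -
  interpret S: setting M X Y W B p \<kappa>
    by (intro setting.intro setting_axioms.intro) (use assms in auto)
  define m where "m = (\<integral>\<omega>. X \<omega> * exp (\<kappa> * X \<omega>) \<partial>M)"
  have L: "(LBINT t:{0<..}. (measure M {\<omega> \<in> space M. exp (W \<omega>) > t}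
                     - measure M {\<omega> \<in> space M. B \<omega> * exp (X \<omega>) * exp (W \<omega>) > t}) * t powr (\<kappa> - 1))
      = (LBINT t:{0<..}. S.phi (ln t) * t powr (\<kappa> - 1))"
    by (rule set_lebesgue_integral_cong) (auto simp: S.R_prob S.MR_prob S.phi_def)
  have E: "(LBINT t:{0<..}. S.phi (ln t) * t powr (\<kappa> - 1)) = (1 - p) / \<kappa>
      + (1 - p) * (LBINT s:{0<..}. measure M {\<omega> \<in> space M. X \<omega> - W \<omega> > s} * exp (\<kappa> * s))
      + p * (LBINT s:{..0}. exp (\<kappa> * s) * measure M {\<omega> \<in> space M. X \<omega> + W \<omega> \<le> s})"
    using S.psi_subst S.psi_split by (simp add: S.H_def[abs_def] S.K_def[abs_def])
  show ?thesis
    unfolding Let_def m_def[symmetric] L E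
    by (rule final_alg[OF kpos])
qed


end
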